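(* Under the standing assumptions (A1)–(A5), the function $Iu$ is continuous on $\mathbb{R}^n$, where $u$ is the value function and $I\varphi(x)=\int_{\mathbb{R}^l}[\varphi(x+j(x,z))-\varphi(x)]\,\nu(dz)$.
   Context: Let $(\Omega,\mathcal F,(\mathcal F_t)_{t\ge0},\mathbb P)$ be a complete filtered probability space satisfying the usual conditions, carrying an $m$-dimensional Brownian motion $W$ and an independent Poisson random measure $N$ on $[0,\infty)\times\mathbb{R}^l$ with Lévy measure $\nu(\cdot)=\mathbb E N(1,\cdot)$ (possibly infinite), and compensated measure $\widetilde N(dt,dz)=N(dt,dz)-\nu(dz)dt$; the filtration is generated by $W$ and $N$. Given $\mu:\mathbb{R}^n\to\mathbb{R}^n$, $\sigma:\mathbb{R}^n\to\mathbb{R}^{n\times m}$, $j:\mathbb{R}^n\times\mathbb{R}^l\to\mathbb{R}^n$, $f:\mathbb{R}^n\to[0,\infty)$, $B:\mathbb{R}^n\to\mathbb{R}$ and $r>0$, the standing assumptions are: (A1) there are constants $C_\mu,C_\sigma>0$ and a positive function $C_j\in L^1\cap L^2(\mathbb{R}^l,\nu)$ with $|\mu(x)-\mu(y)|\le C_\mu|x-y|$, $\|\sigma(x)-\sigma(y)\|\le C_\sigma|x-y|$, $|j(x,z)-j(y,z)|\le C_j(z)|x-y|$ for all $x,y\in\mathbb{R}^n$, $z\in\mathbb{R}^l$; and $j(x,\cdot)\in L^1(\mathbb{R}^l;\nu)$ for every $x$. (A2) with $A(x)=(a_{ij}(x))=\frac12\sigma(x)\sigma(x)^{T}$, there is $\lambda>0$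 with $a_{ij}(x)\xi_i\xi_j\ge\lambda|\xi|^2$ for all $x,\xi$. (A3) $f\ge0$ and $|f(x)-f(y)|\le C_f|x-y|$ for some constant $C_f>0$. (A4) $\inf_{\xi}B(\xi)=K>0$, $B\in C(\mathbb{R}^n\setminus\{0\})$, $|B(\xi)|\to\infty$ as $|\xi|\to\infty$, and $B(\xi_1)+B(\xi_2)\ge B(\xi_1+\xi_2)+K$ for all $\xi_1,\xi_2$. (A5) $r>2C_\mu+C_\sigma^2+\int_{\mathbb{R}^l}C_j^2(z)\nu(dz)$. An admissible impulse control $V=(\tau_1,\xi_1;\tau_2,\xi_2;\dots)$ consists of stopping times $0<\tau_1<\tau_2<\cdots$ with $\tau_i\to\infty$ a.s. and $\mathcal F_{\tau_i}$-measurable $\mathbb{R}^n$-valued $\xi_i$. The controlled state satisfies $X(0)=x$, $dX(t)=\mu(X(t^-))dt+\sigma(X(t^-))dW(t)+\int j(X(t^-),z)\widetilde N(dt,dz)+\sum_i\delta(t-\tau_i)\xi_i$. The cost is $J_x[V]=\mathbb E_x\big(\int_0^\infty e^{-rt}f(X(t))dt+\sum_{i}e^{-r\tau_i}B(\xi_i)\big)$ and the value function is $u(x)=\inf_V J_x[V]$. The operator $I$ is defined on Lipschitz functions $\varphi$ by the formula in the claim ($u$ is Lipschitz). *)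

theory Defs
  imports "HOL-Analysis.Analysis"
begin

definition levy_measure :: "('l::euclidean_space) measure \<Rightarrow> bool" where
  "levy_measure \<nu> \<longleftrightarrow> sets \<nu> = sets borel \<and> emeasure \<nu> {0} = 0 \<and>
     integrable \<nu> (\<lambda>z. min 1 (norm z ^ 2))"

definition jump_op ::
  "('l::euclidean_space) measure \<Rightarrow> ('n::euclidean_space \<Rightarrow> 'l \<Rightarrow> 'n) \<Rightarrow> ('n \<Rightarrow> real) \<Rightarrow> 'n \<Rightarrow> real" where
  "jump_op \<nu> j \<phi> x = (\<integral>z. \<phi> (x + j x z) - \<phi> x \<partial>\<nu>)"

end

theory Submission
  imports Defs
begin

theorem lemma3p2:
  fixes \<nu> :: "(real ^ 'l) measure"
    and j :: "real ^ 'n \<Rightarrow> real ^ 'l \<Rightarrow> real ^ 'n"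
    and Cj :: "real ^ 'l \<Rightarrow> real"
    and u :: "real ^ 'n \<Rightarrow> real"
    and L :: real
  assumes levy: "levy_measure \<nu>"
    and Cj_pos: "\<And>z. Cj z > 0"
    and Cj_L1: "integrable \<nu> Cj"
    and Cj_L2: "integrable \<nu> (\<lambda>z. (Cj z)\<^sup>2)"
    and j_lip: "\<And>x y z. norm (j x z - j y z) \<le> Cj z * norm (x - y)"
    and j_L1: "\<And>x. integrable \<nu> (\<lambda>z. j x z)"
    and u_lip: "L-lipschitz_on UNIV u"
  shows "continuous_on UNIV (jump_op \<nu> j u)"
proof -
  have L0: "0 \<le> L" using u_lip lipschitz_on_nonneg by blast
  have ucont: "continuous_on UNIV u" using u_lip lipschitz_on_continuous_on by blast
  have ub: "\<bar>u a - u b\<bar> \<le> L * norm (a - b)" for a b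
    using lipschitz_onD[OF u_lip, of a b] by (simp add: dist_norm dist_real_def)
  have meas: "(\<lambda>z. u (y + j y z) - u y) \<in> borel_measurable \<nu>" for y
  proof -
    have "(\<lambda>z. j y z) \<in> borel_measurable \<nu>" using j_L1[of y] by (simp add: integrable_iff_bounded)
    then have "(\<lambda>z. y + j y z) \<in> borel_measurable \<nu>" by measurable
    moreover have "u \<in> borel_measurable borel"
      using ucont borel_measurable_continuous_onI by blast
    ultimately show ?thesis using measurable_compose by (intro borel_measurable_diff) (auto intro: measurable_compose)
  qed
  show ?thesis
  proof (rule continuous_at_imp_continuous_on, intro ballI)
    fix x :: "real ^ 'n"
    show "isCont (jump_op \<nu> j u) x"
      unfolding continuous_at_sequentially comp_def
    proof (intro allI impI)
      fix X assume X: "X \<longlonglongrightarrow> x"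
      then have "(\<lambda>n. X n - x) \<longlonglongrightarrow> 0" using LIM_zero by blast
      then have "Bseq (\<lambda>n. X n - x)" using convergent_imp_Bseq convergentI by blast
      then obtain B where B: "\<And>n. norm (X n - x) \<le> B" by (auto simp: Bseq_def)
      show "(\<lambda>n. jump_op \<nu> j u (X n)) \<longlonglongrightarrow> jump_op \<nu> j u x"
        unfolding jump_op_def
      proof (rule integral_dominated_convergence[where w="\<lambda>z. L * (norm (j x z) + Cj z * B)"])
        show "(\<lambda>z. u (x + j x z) - u x) \<in> borel_measurable \<nu>" by (rule meas)
        show "(\<lambda>z. u (X i + j (X i) z) - u (X i)) \<in> borel_measurable \<nu>" for i by (rule meas)
        show "integrable \<nu> (\<lambda>z. L * (norm (j x z) + Cj z * B))"
          proof -
          have "integrable \<nu> (\<lambda>z. norm (j x z))" using j_L1[of x] by (rule integrable_norm)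
          moreover have "integrable \<nu> (\<lambda>z. Cj z * B)" using Cj_L1 by (rule integrable_mult_left)
          ultimately have "integrable \<nu> (\<lambda>z. norm (j x z) + Cj z * B)" by (rule Bochner_Integration.integrable_add)
          then show ?thesis by (rule integrable_mult_right)
        qed
        show "AE z in \<nu>. (\<lambda>i. u (X i + j (X i) z) - u (X i)) \<longlonglongrightarrow> u (x + j x z) - u x"
        proof (rule AE_I2)
          fix z
          have "(\<lambda>i. j (X i) z - j x z) \<longlonglongrightarrow> 0"
          proof (rule Lim_null_comparison)
            show "(\<lambda>i. Cj z * norm (X i - x)) \<longlonglongrightarrow> 0"
              using tendsto_mult_right_zero[OF tendsto_norm_zero[OF \<open>(\<lambda>n. X n - x) \<longlonglongrightarrow> 0\<close>]] by simp
          qed (auto simp: j_lip)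
          then have "(\<lambda>i. j (X i) z) \<longlonglongrightarrow> j x z" by (rule LIM_zero_cancel)
          then have "(\<lambda>i. X i + j (X i) z) \<longlonglongrightarrow> x + j x z" using X by (intro tendsto_add)
          moreover have "isCont u y" for y using ucont continuous_on_eq_continuous_at by blast
          ultimately show "(\<lambda>i. u (X i + j (X i) z) - u (X i)) \<longlonglongrightarrow> u (x + j x z) - u x"
            using X by (intro tendsto_diff isCont_tendsto_compose[where g=u]) auto
        qed
        show "AE z in \<nu>. norm (u (X i + j (X i) z) - u (X i)) \<le> L * (norm (j x z) + Cj z * B)" for i
        proof (rule AE_I2)
          fix z
          have "norm (j (X i) z) \<le> norm (j x z) + norm (j (X i) z - j x z)"
            by (metis add.commute diff_add_cancel norm_triangle_ineq)
          also have "\<dots> \<le> norm (j x z) + Cj z * B"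
            using j_lip[where x="X i" and y=x and z=z] B[of i] Cj_pos[of z]
            by (meson add_left_mono mult_left_mono less_imp_le order_trans)
          finally have "L * norm (j (X i) z) \<le> L * (norm (j x z) + Cj z * B)"
            using L0 by (rule mult_left_mono)
          moreover have "\<bar>u (X i + j (X i) z) - u (X i)\<bar> \<le> L * norm (j (X i) z)"
            using ub[of "X i + j (X i) z" "X i"] by simp
          ultimately show "norm (u (X i + j (X i) z) - u (X i)) \<le> L * (norm (j x z) + Cj z * B)"
            by simp
        qed
      qed
    qed
  qed
qed

end
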